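(* There exist a binary matrix $A$ and two binary column vectors $x,y$ such that $R_{bool}(A|x)=R_{bool}(A|y)=R_{bool}(A)$, but $R_{bool}(A|x,y)>R_{bool}(A)$.
   Context: For a binary $n\times m$ matrix $A$, $R_{bool}(A)$ is the least $k$ such that $A=UV$ with $U\in\{0,1\}^{n\times k}$, $V\in\{0,1\}^{k\times m}$ and the product computed in the Boolean semiring ($1+1=1$). $(A|x_1,\dots,x_t)$ denotes $A$ with columns $x_1,\dots,x_t$ appended on the right. *)

theory Defs
  imports Main
begin

text \<open>Binary matrices of size n x m are represented as functions
  nat \<Rightarrow> nat \<Rightarrow> bool, entry (i,j) relevant for i < n, j < m
  (True = 1, False = 0). Column vectors of length n are nat \<Rightarrow> bool.\<close>

definition bool_factorizable :: "nat \<Rightarrow> nat \<Rightarrow> (nat \<Rightarrow> nat \<Rightarrow> bool) \<Rightarrow> nat \<Rightarrow> bool" where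
  "bool_factorizable n m A k \<longleftrightarrow>
     (\<exists>U V :: nat \<Rightarrow> nat \<Rightarrow> bool.
        \<forall>i<n. \<forall>j<m. A i j = (\<exists>l<k. U i l \<and> V l j))"

definition bool_rank :: "nat \<Rightarrow> nat \<Rightarrow> (nat \<Rightarrow> nat \<Rightarrow> bool) \<Rightarrow> nat" where
  "bool_rank n m A = (LEAST k. bool_factorizable n m A k)"

definition append_col :: "nat \<Rightarrow> (nat \<Rightarrow> nat \<Rightarrow> bool) \<Rightarrow> (nat \<Rightarrow> bool) \<Rightarrow> (nat \<Rightarrow> nat \<Rightarrow> bool)" where
  "append_col m A x = (\<lambda>i j. if j < m then A i j else x i)"

end

theory Submission
  imports Defs
begin

lemma rank_le: "bool_factorizable n m A k \<Longrightarrow> bool_rank n m A \<le> k"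
  unfolding bool_rank_def by (rule Least_le)

lemma rank_ge:
  assumes "bool_factorizable n m A k0" "\<And>k. bool_factorizable n m A k \<Longrightarrow> s \<le> k"
  shows "s \<le> bool_rank n m A"
  unfolding bool_rank_def using assms by (metis LeastI)

lemma fooling:
  assumes fin: "finite F"
    and inr: "\<forall>p\<in>F. fst p < n \<and> snd p < m \<and> A (fst p) (snd p)"
    and fool: "\<forall>p\<in>F. \<forall>q\<in>F. p \<noteq> q \<longrightarrow> \<not> (A (fst p) (snd q) \<and> A (fst q) (snd p))"
    and fac: "bool_factorizable n m A k"
  shows "card F \<le> k"
proof -
  obtain U V where UV: "\<forall>i<n. \<forall>j<m. A i j = (\<exists>l<k. U i l \<and> V l j)"
    using fac unfolding bool_factorizable_def by blast
  define f where "f p = (LEAST l. l < k \<and> U (fst p) l \<and> V l (snd p))" for p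
  have ex: "\<exists>l. l < k \<and> U (fst p) l \<and> V l (snd p)" if "p \<in> F" for p
    using UV inr that by blast
  have fp: "f p < k \<and> U (fst p) (f p) \<and> V (f p) (snd p)" if "p \<in> F" for p
    unfolding f_def using LeastI_ex[OF ex[OF that]] .
  have "inj_on f F"
  proof (rule inj_onI)
    fix p q assume p: "p \<in> F" and q: "q \<in> F" and e: "f p = f q"
    show "p = q"
    proof (rule ccontr)
      assume "p \<noteq> q"
      have fpp: "f p < k" "U (fst p) (f p)" "V (f p) (snd p)" using fp[OF p] by auto
      have fqq: "U (fst q) (f p)" "V (f p) (snd q)" using fp[OF q] e by auto
      have ip: "fst p < n" "snd p < m" and iq: "fst q < n" "snd q < m" using inr p q by auto
      have "A (fst p) (snd q)" using UV ip iq fpp fqq by blast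
      moreover have "A (fst q) (snd p)" using UV ip iq fpp fqq by blast
      ultimately show False using fool p q \<open>p \<noteq> q\<close> by blast
    qed
  qed
  moreover have "f ` F \<subseteq> {..<k}" using fp by auto
  ultimately show ?thesis using card_inj_on_le[of f F "{..<k}"] by simp
qed

definition AA :: "nat \<Rightarrow> nat \<Rightarrow> bool" where
  "AA i j = (if j = 0 then i \<noteq> 0 else True)"
definition xx :: "nat \<Rightarrow> bool" where "xx i = (i \<noteq> 1)"
definition yy :: "nat \<Rightarrow> bool" where "yy i = (i \<noteq> 2)"

lemma all3: "(\<forall>i<(3::nat). P i) = (P 0 \<and> P 1 \<and> P 2)"
  by (auto simp: less_Suc_eq numeral_eq_Suc)
lemma all2: "(\<forall>i<(2::nat). P i) = (P 0 \<and> P 1)"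
  by (auto simp: less_Suc_eq numeral_eq_Suc)
lemma all4: "(\<forall>i<(4::nat). P i) = (P 0 \<and> P 1 \<and> P 2 \<and> P 3)"
  by (auto simp: less_Suc_eq numeral_eq_Suc)
lemma ex2: "(\<exists>i<(2::nat). P i) = (P 0 \<or> P 1)"
  by (auto simp: less_Suc_eq numeral_eq_Suc)

lemma facA: "bool_factorizable 3 2 AA 2"
  unfolding bool_factorizable_def
  apply (rule exI[of _ "\<lambda>i l. (l = 0 \<and> i \<noteq> 0) \<or> (l = 1 \<and> i \<noteq> 1)"])
  apply (rule exI[of _ "\<lambda>l j. (l = 0 \<and> j \<le> 1) \<or> (l = 1 \<and> j \<ge> 1)"])
  by (simp add: all3 all2 ex2 AA_def)

lemma facAx: "bool_factorizable 3 (2+1) (append_col 2 AA xx) 2"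
  unfolding bool_factorizable_def
  apply (rule exI[of _ "\<lambda>i l. (l = 0 \<and> i \<noteq> 0) \<or> (l = 1 \<and> i \<noteq> 1)"])
  apply (rule exI[of _ "\<lambda>l j. (l = 0 \<and> j \<le> 1) \<or> (l = 1 \<and> j \<ge> 1)"])
  by (simp add: all3 all2 ex2 AA_def xx_def append_col_def)

lemma facAy: "bool_factorizable 3 (2+1) (append_col 2 AA yy) 2"
  unfolding bool_factorizable_def
  apply (rule exI[of _ "\<lambda>i l. (l = 0 \<and> i \<noteq> 0) \<or> (l = 1 \<and> i \<noteq> 2)"])
  apply (rule exI[of _ "\<lambda>l j. (l = 0 \<and> j \<le> 1) \<or> (l = 1 \<and> j \<ge> 1)"])
  by (simp add: all3 all2 ex2 AA_def yy_def append_col_def)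

lemma facB: "bool_factorizable 3 (2+2) (append_col (2+1) (append_col 2 AA xx) yy) 3"
  unfolding bool_factorizable_def
  apply (rule exI[of _ "\<lambda>i l. l = i"])
  apply (rule exI[of _ "\<lambda>l j. append_col (2+1) (append_col 2 AA xx) yy l j"])
  by (auto simp: less_Suc_eq numeral_eq_Suc)

lemma lowA: "bool_factorizable 3 m M k \<Longrightarrow> (\<forall>p\<in>{(0::nat,1::nat),(1,0)}. fst p < 3 \<and> snd p < m \<and> M (fst p) (snd p))
  \<Longrightarrow> (\<forall>p\<in>{(0::nat,1::nat),(1,0)}. \<forall>q\<in>{(0,1),(1,0)}. p \<noteq> q \<longrightarrow> \<not> (M (fst p) (snd q) \<and> M (fst q) (snd p)))
  \<Longrightarrow> 2 \<le> k"
  using fooling[of "{(0::nat,1::nat),(1,0)}" 3 m M k] by simp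

theorem mainTheorem8:
  shows "\<exists>(n::nat) (m::nat) (A :: nat \<Rightarrow> nat \<Rightarrow> bool) (x :: nat \<Rightarrow> bool) (y :: nat \<Rightarrow> bool).
           bool_rank n (m + 1) (append_col m A x) = bool_rank n m A \<and>
           bool_rank n (m + 1) (append_col m A y) = bool_rank n m A \<and>
           bool_rank n (m + 2) (append_col (m + 1) (append_col m A x) y) > bool_rank n m A"
proof -
  have rA: "bool_rank 3 2 AA = 2"
  proof (rule antisym)
    show "bool_rank 3 2 AA \<le> 2" by (rule rank_le[OF facA])
    show "2 \<le> bool_rank 3 2 AA"
      by (rule rank_ge[OF facA], rule lowA) (auto simp: AA_def)
  qed
  have rAx: "bool_rank 3 (2+1) (append_col 2 AA xx) = 2"
  proof (rule antisym)
    show "bool_rank 3 (2+1) (append_col 2 AA xx) \<le> 2" by (rule rank_le[OF facAx])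
    show "2 \<le> bool_rank 3 (2+1) (append_col 2 AA xx)"
      by (rule rank_ge[OF facAx], rule lowA) (auto simp: AA_def append_col_def)
  qed
  have rAy: "bool_rank 3 (2+1) (append_col 2 AA yy) = 2"
  proof (rule antisym)
    show "bool_rank 3 (2+1) (append_col 2 AA yy) \<le> 2" by (rule rank_le[OF facAy])
    show "2 \<le> bool_rank 3 (2+1) (append_col 2 AA yy)"
      by (rule rank_ge[OF facAy], rule lowA) (auto simp: AA_def append_col_def)
  qed
  have rB: "3 \<le> bool_rank 3 (2+2) (append_col (2+1) (append_col 2 AA xx) yy)"
  proof (rule rank_ge[OF facB])
    fix k assume fk: "bool_factorizable 3 (2+2) (append_col (2+1) (append_col 2 AA xx) yy) k"
    have "card {(0::nat,2::nat),(1,3),(2,0)} \<le> k"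
      by (rule fooling[OF _ _ _ fk]) (auto simp: AA_def xx_def yy_def append_col_def)
    then show "3 \<le> k" by simp
  qed
  show ?thesis
    by (rule exI[of _ 3], rule exI[of _ 2], rule exI[of _ AA], rule exI[of _ xx], rule exI[of _ yy])
      (use rA rAx rAy rB in simp)
qed

end
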